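(* Let $p\ge5$ be prime, $n\ge1$, $a=(p-1)/(p-1,12)$, $b=(p+1)/(p+1,12)$. Define the $(n+1)\times(n+1)$ matrix $M=(M_{ij})_{i,j=0}^n$ by $M_{ij}=p^i/24$ if $j\ge n/2$ and $i\le j$; $M_{ij}=p^{2j-i}/24$ if $j\ge n/2$ and $i>j$; $M_{ij}=p^{n-i}/24$ if $j<n/2$ and $i\ge j$; $M_{ij}=p^{n+i-2j}/24$ if $j<n/2$ and $i<j$. Then $\det M=(ab)^np^{(n-1)(3n-1)/4}/24$ if $n$ is odd, and $\det M=(ab)^np^{n(3n-4)/4}/24$ if $n$ is even.
   Context: Note $ab=(p^2-1)/24$ for $p\ge5$. ($M_{ij}$ is the order of $\eta(p^i\tau)$ at a cusp of level $p^j$ of $X_0(p^n)$.) *)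

theory Defs
  imports "HOL-Computational_Algebra.Primes" "Jordan_Normal_Form.Determinant"
begin

text \<open>The matrix M = (M_ij), i,j = 0..n, of orders of eta(p^i tau) at cusps of level p^j
  on X_0(p^n), as in the paper.  Entries are real; exponents are integers.\<close>
definition etaOrderMat :: "nat \<Rightarrow> nat \<Rightarrow> real mat" where
  "etaOrderMat p n = mat (n+1) (n+1) (\<lambda>(i,j).
     if n \<le> 2*j then
       (if i \<le> j then real p powi (int i) / 24
        else real p powi (2 * int j - int i) / 24)
     else
       (if j \<le> i then real p powi (int n - int i) / 24
        else real p powi (int n + int i - 2 * int j) / 24))"

end

theory Submission
  imports Defs
begin

definition cc :: "nat \<Rightarrow> nat \<Rightarrow> nat" where
  "cc n j = (if n \<le> 2*j then j else n - j)"

definition gg :: "nat \<Rightarrow> nat \<Rightarrow> nat \<Rightarrow> nat \<Rightarrow> real" where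
  "gg p n i j = real p powi (int (cc n j) - \<bar>int i - int j\<bar>) / 24"

lemma mat_eq: "etaOrderMat p n = mat (n+1) (n+1) (\<lambda>(i,j). gg p n i j)"
  unfolding etaOrderMat_def
  by (rule cong[where f="mat (n+1) (n+1)"], rule refl, auto simp: gg_def cc_def fun_eq_iff
     intro!: arg_cong[where f="\<lambda>x. real p powi x / 24"])

lemma sum_two:
  fixes f :: "nat \<Rightarrow> real"
  assumes "i \<ge> 1" "i < m"
  shows "(\<Sum>k\<in>{0..<m}. (if k = i then 1 else if k + 1 = i then - r else 0) * f k) = f i - r * f (i-1)"
proof -
  have "(\<Sum>k\<in>{0..<m}. (if k = i then 1 else if k + 1 = i then - r else 0) * f k)
     = (\<Sum>k\<in>{0..<m}. (if k = i then f k else 0) + (if k = i - 1 then - r * f k else 0))"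
    using assms by (intro sum.cong) auto
  also have "\<dots> = f i - r * f (i-1)" using assms by (simp add: sum.distrib)
  finally show ?thesis .
qed

lemma sum_one:
  fixes f :: "nat \<Rightarrow> real"
  assumes "0 < m" "i = 0"
  shows "(\<Sum>k\<in>{0..<m}. (if k = i then 1 else if k + 1 = i then - r else 0) * f k) = f 0"
proof -
  have "(\<Sum>k\<in>{0..<m}. (if k = i then 1 else if k + 1 = i then - r else 0) * f k)
     = (\<Sum>k\<in>{0..<m}. (if k = 0 then f k else 0))"
    using assms by (intro sum.cong) auto
  also have "\<dots> = f 0" using assms by simp
  finally show ?thesis .
qed

lemma S_formula: "4 * (\<Sum>j<n+1. cc n j) = 3*n*n + 4*n + (if odd n then 1 else 0)"
proof (induction n rule: less_induct)
  case (less n)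
  show ?case
  proof (cases "n < 2")
    case True
    then have "n = 0 \<or> n = 1" by auto
    then show ?thesis by (auto simp: cc_def)
  next
    case False
    then obtain m where m: "n = m + 2" by (metis add.commute le_Suc_ex not_less)
    have IH: "4 * (\<Sum>j<m+1. cc m j) = 3*m*m + 4*m + (if odd m then 1 else 0)"
      using less m by auto
    have sh: "\<And>j. cc (m+2) (Suc j) = cc m j + 1" by (auto simp: cc_def)
    have "(\<Sum>j<n+1. cc n j) = cc n 0 + (\<Sum>j<m+2. cc n (Suc j))"
      unfolding m using sum.lessThan_Suc_shift[of "cc (m+2)" "m+2"] by simp
    also have "\<dots> = (m+2) + (\<Sum>j<m+2. cc m j + 1)" using sh m by (simp add: cc_def)
    also have "\<dots> = (m+2) + (\<Sum>j<m+2. cc m j) + (m+2)"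
      by (subst sum.distrib) simp
    also have "\<dots> = (m+2) + (\<Sum>j<m+1. cc m j) + cc m (m+1) + (m+2)"
      by simp
    also have "cc m (m+1) = m + 1" by (simp add: cc_def)
    finally have "(\<Sum>j<n+1. cc n j) = (\<Sum>j<m+1. cc m j) + 3*m+5" by simp
    then show ?thesis using IH m by (simp add: algebra_simps)
  qed
qed

lemma gl: "gcd (12*k + r) 12 = gcd r (12::nat)"
  by (metis gcd.commute gcd_add_mult mult.commute)

lemma gcd_prod:
  fixes p :: nat
  assumes "prime p" "p \<ge> 5"
  shows "gcd (p - 1) 12 * gcd (p + 1) 12 = 24"
proof -
  have dv: "\<forall>m. m dvd p \<longrightarrow> m = 1 \<or> m = p" using assms(1) prime_nat_iff by blast
  have "\<not> 2 dvd p" using dv assms(2) by force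
  then have h2: "p mod 2 \<noteq> 0" by presburger
  have "\<not> 3 dvd p" using dv assms(2) by force
  then have h3: "p mod 3 \<noteq> 0" by presburger
  have "p mod 12 = 1 \<or> p mod 12 = 5 \<or> p mod 12 = 7 \<or> p mod 12 = 11" using h2 h3 by presburger
  then have "p mod 12 \<in> {1,5,7,11}" by simp
  then obtain k q where kq: "p = 12*k + q" "q \<in> {1,5,7,11}" by (metis div_mult_mod_eq mult.commute)
  have g8: "gcd (8::nat) 12 = 4" by (simp add: gcd_non_0_nat)
  have g10: "gcd (10::nat) 12 = 2" by (simp add: gcd_non_0_nat)
  from kq(2) show ?thesis
  proof (elim insertE emptyE)
    assume "q = 1" then show ?thesis using kq(1) gl[of k 0] gl[of k 2] by (simp add: add.commute)
  next
    assume "q = 5" then show ?thesis using kq(1) gl[of k 4] gl[of k 6] by (simp add: add.commute)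
  next
    assume "q = 7" then show ?thesis using kq(1) gl[of k 6] gl[of k 8] g8 by (simp add: add.commute)
  next
    assume "q = 11" then show ?thesis using kq(1) gl[of k 10] gl[of "k+1" 0] g10 by (simp add: algebra_simps)
  qed
qed

lemma gg_shift:
  assumes "p > 0" "j < i"
  shows "gg p n (i-1) j = real p * gg p n i j"
proof -
  have e: "int (cc n j) - \<bar>int (i-1) - int j\<bar> = (int (cc n j) - \<bar>int i - int j\<bar>) + 1"
    using assms by auto
  show ?thesis unfolding gg_def e using assms by (simp add: power_int_add)
qed

lemma gg_diag0: "gg p n i i = real p ^ cc n i / 24"
  by (simp add: gg_def)

lemma gg_diag1:
  assumes "p > 0" "i \<ge> 1"
  shows "gg p n (i-1) i = real p ^ cc n i / real p / 24"
proof -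
  have e: "int (cc n i) - \<bar>int (i-1) - int i\<bar> = int (cc n i) - 1" using assms by auto
  show ?thesis unfolding gg_def e using assms by (simp add: power_int_diff)
qed

lemma det_main:
  fixes p n :: nat
  assumes p: "p > 0"
  shows "det (mat (n+1) (n+1) (\<lambda>(i,j). gg p n i j))
     = (\<Prod>i<n+1. real p ^ cc n i) * ((1 - 1 / real p ^ 2) / 24) ^ n / 24"
proof -
  define r where "r = 1 / real p"
  define M where "M = mat (n+1) (n+1) (\<lambda>(i,j). gg p n i j)"
  define E where "E = mat (n+1) (n+1) (\<lambda>(i,k). if k = i then 1 else if k + 1 = i then - r else (0::real))"
  define T where "T = E * M"
  have EM: "E \<in> carrier_mat (n+1) (n+1)" "M \<in> carrier_mat (n+1) (n+1)"
    unfolding E_def M_def by auto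
  have detE: "det E = 1"
  proof -
    have "det E = prod_list (diag_mat E)"
      by (rule det_lower_triangular[OF _ EM(1)]) (auto simp: E_def)
    also have "diag_mat E = replicate (n+1) 1"
      by (rule nth_equalityI) (auto simp: diag_mat_def E_def simp del: upt_Suc replicate_Suc)
    finally show ?thesis by simp
  qed
  have Tent: "T $$ (i,j) = (if i = 0 then gg p n 0 j else gg p n i j - r * gg p n (i-1) j)"
    if "i < n+1" "j < n+1" for i j
  proof -
    have "T $$ (i,j) = (\<Sum>k\<in>{0..<n+1}. (if k = i then 1 else if k + 1 = i then - r else 0) * gg p n k j)"
      unfolding T_def using that EM by (simp add: scalar_prod_def E_def M_def)
    also have "\<dots> = (if i = 0 then gg p n 0 j else gg p n i j - r * gg p n (i-1) j)"
    proof (cases "i = 0")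
      case True
      have "0 < n+1" by simp
      from sum_one[OF this True, of r "\<lambda>k. gg p n k j"] show ?thesis by (simp only: if_P[OF True])
    next
      case False
      have "i \<ge> 1" using False by simp
      from sum_two[OF this that(1), of r "\<lambda>k. gg p n k j"] show ?thesis by (simp only: if_not_P[OF False])
    qed
    finally show ?thesis .
  qed
  have TC: "T \<in> carrier_mat (n+1) (n+1)" unfolding T_def using EM by auto
  have ut: "upper_triangular T"
    unfolding upper_triangular_def
  proof (intro allI impI)
    fix i j assume ij: "i < dim_row T" "j < i"
    then have "i < n+1" "j < n+1" using TC by auto
    then show "T $$ (i,j) = 0" using Tent ij gg_shift[OF p, of j i n] p by (simp add: r_def)
  qed
  have detT: "det T = (\<Prod>i<n+1. T $$ (i,i))"
  proof -
    have "det T = prod_list (diag_mat T)" by (rule det_upper_triangular[OF ut TC])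
    also have "\<dots> = (\<Prod>i<n+1. T $$ (i,i))"
      unfolding diag_mat_def using TC
      by (simp add: prod.distinct_set_conv_list[symmetric] atLeast0LessThan)
    finally show ?thesis .
  qed
  define K where "K = (1 - 1 / real p ^ 2) / 24"
  have diag: "T $$ (i,i) = (if i = 0 then real p ^ cc n 0 / 24 else real p ^ cc n i * K)" if "i < n+1" for i
    using Tent[OF that that] gg_diag0 gg_diag1[OF p, of i n] p
    by (auto simp: r_def K_def field_simps power2_eq_square)
  have "(\<Prod>i<n+1. T $$ (i,i)) = T $$ (0,0) * (\<Prod>i<n. T $$ (Suc i, Suc i))"
    using prod.lessThan_Suc_shift[of "\<lambda>i. T $$ (i,i)" n] by simp
  also have "\<dots> = real p ^ cc n 0 / 24 * (\<Prod>i<n. real p ^ cc n (Suc i) * K)"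
    using diag by simp
  also have "\<dots> = (real p ^ cc n 0 * (\<Prod>i<n. real p ^ cc n (Suc i))) * K ^ n / 24"
    by (simp add: prod.distrib)
  also have "real p ^ cc n 0 * (\<Prod>i<n. real p ^ cc n (Suc i)) = (\<Prod>i<n+1. real p ^ cc n i)"
    using prod.lessThan_Suc_shift[of "\<lambda>i. real p ^ cc n i" n] by simp
  finally have "det T = (\<Prod>i<n+1. real p ^ cc n i) * K ^ n / 24" using detT by simp
  moreover have "det T = det M" unfolding T_def using det_mult[OF EM] detE by simp
  ultimately show ?thesis unfolding M_def K_def by simp
qed

theorem mainTheorem8:
  fixes p n :: nat
  assumes "prime p" "p \<ge> 5" "n \<ge> 1"
  defines "a \<equiv> (p - 1) div gcd (p - 1) 12"
      and "b \<equiv> (p + 1) div gcd (p + 1) 12"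
  shows "det (etaOrderMat p n) =
    (if odd n
     then (real a * real b) ^ n * real p ^ (((n - 1) * (3 * n - 1)) div 4) / 24
     else (real a * real b) ^ n * real p ^ ((n * (3 * n - 4)) div 4) / 24)"
proof -
  have p0: "p > 0" using assms(2) by simp
  define S where "S = (\<Sum>j<n+1. cc n j)"
  have S4: "4 * S = 3*n*n + 4*n + (if odd n then 1 else 0)" unfolding S_def by (rule S_formula)
  have ab_nat: "a * b * 24 = (p - 1) * (p + 1)"
  proof -
    have "a * gcd (p - 1) 12 = p - 1" unfolding a_def by simp
    moreover have "b * gcd (p + 1) 12 = p + 1" unfolding b_def by simp
    ultimately have "a * b * (gcd (p - 1) 12 * gcd (p + 1) 12) = (p - 1) * (p + 1)"
      by (metis mult.assoc mult.left_commute)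
    then show ?thesis using gcd_prod[OF assms(1,2)] by simp
  qed
  have ab_real: "real a * real b * 24 = real p ^ 2 - 1"
  proof -
    have "real (a * b * 24) = real ((p - 1) * (p + 1))" using ab_nat by simp
    then show ?thesis using p0 by (simp add: of_nat_diff power2_eq_square algebra_simps)
  qed
  have K: "(1 - 1 / real p ^ 2) / 24 = real a * real b / real p ^ 2"
  proof -
    have ab': "real a * real b = (real p ^ 2 - 1) / 24" using ab_real by simp
    have "real p ^ 2 \<noteq> 0" using p0 by simp
    then show ?thesis unfolding ab' by (simp add: diff_divide_distrib)
  qed
  have P: "(\<Prod>i<n+1. real p ^ cc n i) = real p ^ S" unfolding S_def by (simp only: power_sum)
  have S2: "S \<ge> 2 * n"
  proof (cases "n = 1")
    case True then show ?thesis using S4 by simp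
  next
    case False
    then have "n \<ge> 2" using assms(3) by simp
    then have "n * n \<ge> 2 * n" by (simp add: mult_le_mono1)
    moreover have "4*S \<ge> 3*(n*n) + 4*n" using S4 by (simp add: mult.assoc)
    ultimately show ?thesis by linarith
  qed
  have "det (etaOrderMat p n) = real p ^ S * (real a * real b / real p ^ 2) ^ n / 24"
    unfolding mat_eq det_main[OF p0] P K ..
  also have "\<dots> = (real a * real b) ^ n * real p ^ (S - 2 * n) / 24"
  proof -
    have "real p ^ S = real p ^ (S - 2*n) * (real p ^ 2) ^ n"
      using S2 by (simp add: power_add[symmetric] power_mult[symmetric])
    then show ?thesis using p0 by (simp add: power_divide field_simps)
  qed
  also have "S - 2 * n = (if odd n then ((n - 1) * (3 * n - 1)) div 4 else (n * (3 * n - 4)) div 4)"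
  proof (cases "odd n")
    case True
    then have "4 * (S - 2*n) = (n - 1) * (3 * n - 1)" using S4 S2 assms(3)
      by (cases n) (simp_all add: algebra_simps)
    then show ?thesis using True by simp
  next
    case False
    then obtain m where m: "n = 2*m" by auto
    then have "m \<ge> 1" using assms(3) by simp
    then have "4 * (S - 2*n) = n * (3 * n - 4)" using S4 S2 False m
      by (cases m) (simp_all add: algebra_simps)
    then show ?thesis using False by simp
  qed
  finally show ?thesis by (simp split: if_splits)
qed
end
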